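(* Let $D\in\mathbb{N}$, $r\in\{1,\dots,D\}$ and $p\in(0,1)$. For $\alpha>0$ let $Y_\alpha\sim\mathrm{NB}_{\alpha,p}^{(r,D)}$, and let $U\sim\mathcal{N}_{0,1}^{(r,D)}$. Then $$\lim_{\alpha\to\infty}\mathbb{D}[Y_\alpha]=\frac{1}{p}\operatorname{Var}(U).$$
   Context: $\mathrm{NB}_{\alpha,p}$ denotes the negative binomial distribution on $\mathbb{N}_0$ with pmf $\frac{\Gamma(y+\alpha)}{y!\,\Gamma(\alpha)}p^{\alpha}(1-p)^{y}$. It has mean $\alpha(1-p)/p$, variance $\alpha(1-p)/p^2$, and index of dispersion $1/p$. $\mathrm{NB}_{\alpha,p}^{(r,D)}$ is the law of the $r$-th smallest of $D$ i.i.d. $\mathrm{NB}_{\alpha,p}$ variables, and $\mathcal{N}_{0,1}^{(r,D)}$ is the law of the $r$-th smallest of $D$ i.i.d. standard normal variables. For a nonnegative random variable $Y$ with positive finite mean, the index of dispersion is $\mathbb{D}[Y]=\operatorname{Var}(Y)/\mathbb{E}[Y]$. *)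

theory Defs
  imports "HOL-Probability.Probability"
begin

definition nb_pmf :: "real \<Rightarrow> real \<Rightarrow> nat \<Rightarrow> real" where
  "nb_pmf \<alpha> p y = Gamma (real y + \<alpha>) / (fact y * Gamma \<alpha>) * p powr \<alpha> * (1 - p) ^ y"

definition NB :: "real \<Rightarrow> real \<Rightarrow> real measure" where
  "NB \<alpha> p = distr (density (count_space UNIV) (\<lambda>y::nat. ennreal (nb_pmf \<alpha> p y))) borel real"

definition std_normal :: "real measure" where
  "std_normal = density lborel std_normal_density"

text \<open>The r-th smallest entry (r counted from 1) of the vector (x 0, ..., x (D-1)).\<close>
definition rth_smallest :: "nat \<Rightarrow> nat \<Rightarrow> (nat \<Rightarrow> real) \<Rightarrow> real" where
  "rth_smallest D r x = sort (map x [0..<D]) ! (r - 1)"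

definition order_stat_law :: "nat \<Rightarrow> nat \<Rightarrow> real measure \<Rightarrow> real measure" where
  "order_stat_law D r M = distr (PiM {..<D} (\<lambda>_. M)) borel (rth_smallest D r)"

definition mean_of :: "real measure \<Rightarrow> real" where
  "mean_of N = (\<integral>x. x \<partial>N)"

definition var_of :: "real measure \<Rightarrow> real" where
  "var_of N = (\<integral>x. (x - mean_of N)\<^sup>2 \<partial>N)"

definition dispersion :: "real measure \<Rightarrow> real" where
  "dispersion N = var_of N / mean_of N"

end

theory Submission
  imports Defs "HOL-Real_Asymp.Real_Asymp"
begin

lemma cnt_sort: "length (filter P (sort xs)) = length (filter P xs)"
  by (simp add: filter_sort)

lemma rth_L1:
  fixes xs :: "real list"
  assumes "1 \<le> r" "r \<le> length xs"
  shows "r \<le> length (filter (\<lambda>a. a \<le> sort xs ! (r-1)) xs)"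
proof -
  let ?s = "sort xs"
  have "length (filter (\<lambda>a. a \<le> ?s ! (r-1)) xs) = length (filter (\<lambda>a. a \<le> ?s ! (r-1)) ?s)"
    by (simp add: cnt_sort)
  also have "\<dots> = card {i. i < length ?s \<and> ?s ! i \<le> ?s ! (r-1)}"
    by (rule length_filter_conv_card)
  finally have eq: "length (filter (\<lambda>a. a \<le> ?s ! (r-1)) xs) = card {i. i < length ?s \<and> ?s ! i \<le> ?s ! (r-1)}" .
  have "{0..<r} \<subseteq> {i. i < length ?s \<and> ?s ! i \<le> ?s ! (r-1)}"
    using assms by (auto intro!: sorted_nth_mono)
  then have "card {0..<r} \<le> card {i. i < length ?s \<and> ?s ! i \<le> ?s ! (r-1)}"
    by (intro card_mono) auto
  then show ?thesis using eq by simp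
qed

lemma rth_L2:
  fixes xs :: "real list"
  assumes "1 \<le> r" "r \<le> length xs" "r \<le> length (filter (\<lambda>a. a \<le> c) xs)"
  shows "sort xs ! (r-1) \<le> c"
proof (rule ccontr)
  let ?s = "sort xs"
  assume "\<not> ?s ! (r-1) \<le> c"
  then have lt: "c < ?s ! (r-1)" by simp
  have "length (filter (\<lambda>a. a \<le> c) xs) = length (filter (\<lambda>a. a \<le> c) ?s)"
    by (rule cnt_sort[symmetric])
  also have "\<dots> = card {i. i < length ?s \<and> ?s ! i \<le> c}"
    by (rule length_filter_conv_card)
  finally have eq: "length (filter (\<lambda>a. a \<le> c) xs) = card {i. i < length ?s \<and> ?s ! i \<le> c}" .
  have sub: "{i. i < length ?s \<and> ?s ! i \<le> c} \<subseteq> {0..<r-1}"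
  proof
    fix i assume i: "i \<in> {i. i < length ?s \<and> ?s ! i \<le> c}"
    then have i1: "i < length ?s" and i2: "?s ! i \<le> c" by auto
    show "i \<in> {0..<r-1}"
    proof (rule ccontr)
      assume "i \<notin> {0..<r-1}"
      then have "r - 1 \<le> i" by simp
      then have "?s ! (r-1) \<le> ?s ! i" using i1 sorted_nth_mono[of ?s "r-1" i] by simp
      then show False using i2 lt by linarith
    qed
  qed
  have "card {i. i < length ?s \<and> ?s ! i \<le> c} \<le> card {0..<r-1}"
    using sub by (intro card_mono) auto
  then have "card {i. i < length ?s \<and> ?s ! i \<le> c} \<le> r - 1" by simp
  then show False using assms eq by linarith
qed

definition cnt :: "nat \<Rightarrow> (nat \<Rightarrow> real) \<Rightarrow> real \<Rightarrow> nat" where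
  "cnt D x c = card {i. i < D \<and> x i \<le> c}"

lemma cnt_eq: "length (filter (\<lambda>a. a \<le> c) (map x [0..<D])) = cnt D x c"
  unfolding cnt_def length_filter_conv_card by (intro arg_cong[where f=card]) auto

lemma rth1: "1 \<le> r \<Longrightarrow> r \<le> D \<Longrightarrow> r \<le> cnt D x (rth_smallest D r x)"
  using rth_L1[of r "map x [0..<D]"] by (simp add: rth_smallest_def cnt_eq[symmetric])

lemma rth2: "1 \<le> r \<Longrightarrow> r \<le> D \<Longrightarrow> r \<le> cnt D x c \<Longrightarrow> rth_smallest D r x \<le> c"
  using rth_L2[of r "map x [0..<D]" c] by (simp add: rth_smallest_def cnt_eq[symmetric])

lemma rth_le_iff: "1 \<le> r \<Longrightarrow> r \<le> D \<Longrightarrow> rth_smallest D r x \<le> c \<longleftrightarrow> r \<le> cnt D x c"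
proof
  assume a: "1 \<le> r" "r \<le> D" "rth_smallest D r x \<le> c"
  have "cnt D x (rth_smallest D r x) \<le> cnt D x c"
    unfolding cnt_def using a by (intro card_mono) auto
  then show "r \<le> cnt D x c" using rth1[OF a(1,2), of x] by linarith
qed (rule rth2)

lemma rth_mem: "1 \<le> r \<Longrightarrow> r \<le> D \<Longrightarrow> \<exists>j<D. rth_smallest D r x = x j"
proof -
  assume "1 \<le> r" "r \<le> D"
  then have "rth_smallest D r x \<in> set (sort (map x [0..<D]))"
    unfolding rth_smallest_def by (intro nth_mem) simp
  then show ?thesis by auto
qed

lemma rth_lip:
  assumes "1 \<le> r" "r \<le> D" "\<And>i. i < D \<Longrightarrow> \<bar>x i - y i\<bar> \<le> e"
  shows "\<bar>rth_smallest D r x - rth_smallest D r y\<bar> \<le> e"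
proof -
  have A: "rth_smallest D r y \<le> rth_smallest D r x + e"
    if h: "\<And>i. i < D \<Longrightarrow> \<bar>x i - y i\<bar> \<le> e" for x y
  proof -
    have "{i. i < D \<and> x i \<le> rth_smallest D r x} \<subseteq> {i. i < D \<and> y i \<le> rth_smallest D r x + e}"
    proof
      fix i assume "i \<in> {i. i < D \<and> x i \<le> rth_smallest D r x}"
      then show "i \<in> {i. i < D \<and> y i \<le> rth_smallest D r x + e}" using h[of i] by auto
    qed
    then have "cnt D x (rth_smallest D r x) \<le> cnt D y (rth_smallest D r x + e)"
      unfolding cnt_def by (intro card_mono) auto
    then show ?thesis using rth1[OF assms(1,2), of x] by (intro rth2 assms(1,2)) linarith
  qed
  have "rth_smallest D r y \<le> rth_smallest D r x + e" using assms(3) by (rule A)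
  moreover have "rth_smallest D r x \<le> rth_smallest D r y + e" using assms(3) by (intro A) (simp add: abs_minus_commute)
  ultimately show ?thesis by linarith
qed

lemma rth_mono_map:
  assumes "1 \<le> r" "r \<le> D" "strict_mono (f::real\<Rightarrow>real)"
  shows "rth_smallest D r (\<lambda>i. f (x i)) = f (rth_smallest D r x)"
proof -
  have fle: "f a \<le> f b \<longleftrightarrow> a \<le> b" for a b using assms(3) by (simp add: strict_mono_less_eq)
  have cf: "cnt D (\<lambda>i. f (x i)) (f c) = cnt D x c" for c unfolding cnt_def fle ..
  have "rth_smallest D r (\<lambda>i. f (x i)) \<le> f (rth_smallest D r x)"
    using rth1[OF assms(1,2), of x] by (intro rth2 assms(1,2)) (simp add: cf)
  moreover obtain j where j: "j < D" "rth_smallest D r (\<lambda>i. f (x i)) = f (x j)"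
    using rth_mem[OF assms(1,2)] by blast
  moreover have "rth_smallest D r x \<le> x j"
    using rth1[OF assms(1,2), of "\<lambda>i. f (x i)"] j by (intro rth2 assms(1,2)) (simp add: cf)
  ultimately show ?thesis using fle by (metis order_antisym)
qed

lemma cnt_sum: "real (cnt D x c) = (\<Sum>i<D. indicator {..c} (x i))"
  unfolding cnt_def
proof -
  have "(\<Sum>i<D. indicator {..c} (x i) :: real) = (\<Sum>i\<in>{i. i < D \<and> x i \<le> c}. 1)"
    by (rule sum.mono_neutral_cong_right) (auto simp: indicator_def)
  then show "real (card {i. i < D \<and> x i \<le> c}) = (\<Sum>i<D. indicator {..c} (x i))" by simp
qed

lemma rth_measurable[measurable]:
  assumes "1 \<le> r" "r \<le> D"
  shows "rth_smallest D r \<in> borel_measurable (PiM {..<D} (\<lambda>_. borel))"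
proof (rule borel_measurableI_le)
  fix c
  have "{w \<in> space (PiM {..<D} (\<lambda>_. borel)). rth_smallest D r w \<le> c}
      = {w \<in> space (PiM {..<D} (\<lambda>_. borel)). real r \<le> (\<Sum>i<D. indicator {..c} (w i))}"
    using assms by (auto simp: rth_le_iff cnt_sum[symmetric])
  also have "\<dots> \<in> sets (PiM {..<D} (\<lambda>_. borel))" by measurable
  finally show "{w \<in> space (PiM {..<D} (\<lambda>_. borel)). rth_smallest D r w \<le> c} \<in> sets (PiM {..<D} (\<lambda>_. borel))" .
qed

lemma binser_complex:
  fixes a :: real and z :: complex
  assumes "norm z < 1"
  shows "(\<lambda>n. of_real (pochhammer a n / fact n) * z^n) sums (1 - z) powr (- of_real a)"
proof -
  have "(\<lambda>n. ((- of_real a) gchoose n) * (-z)^n) sums (1 + (-z)) powr (- of_real a)"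
    by (rule gen_binomial_complex) (use assms in simp)
  moreover have "((- of_real a) gchoose n) * (-z)^n = of_real (pochhammer a n / fact n) * z^n" for n
  proof -
    have "((- of_real a :: complex) gchoose n) * (-z)^n
        = ((- 1) ^ n * (-1)^n) * pochhammer (of_real a) n / fact n * z^n"
      by (simp add: gbinomial_pochhammer power_minus[of z])
    also have "(- 1 :: complex) ^ n * (-1)^n = 1"
      by (simp flip: power_mult_distrib)
    finally show ?thesis by (simp add: pochhammer_of_real)
  qed
  ultimately show ?thesis by simp
qed

lemma binser_real:
  fixes a x :: real
  assumes "0 \<le> x" "x < 1"
  shows "(\<lambda>n. pochhammer a n / fact n * x^n) sums (1 - x) powr (- a)"
proof -
  have "(\<lambda>n. of_real (pochhammer a n / fact n) * (of_real x :: complex)^n) sums (1 - of_real x) powr (- of_real a)"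
    by (rule binser_complex) (use assms in simp)
  also have "(1 - of_real x :: complex) powr (- of_real a) = of_real ((1 - x) powr (- a))"
    using assms powr_of_real[of "1 - x" "- a"] by simp
  finally have "(\<lambda>n. complex_of_real (pochhammer a n / fact n * x^n)) sums of_real ((1 - x) powr (- a))"
    by simp
  then show ?thesis by (simp only: sums_of_real_iff)
qed

definition cf :: "real \<Rightarrow> real \<Rightarrow> nat \<Rightarrow> real" where
  "cf a x n = pochhammer a n / fact n * x^n"


lemma S0: "0 \<le> x \<Longrightarrow> x < 1 \<Longrightarrow> cf a x sums (1 - x) powr (- a)"
  unfolding cf_def by (rule binser_real)

lemma S1:
  assumes "0 \<le> x" "x < 1"
  shows "(\<lambda>n. real n * cf a x n) sums (a * x * (1 - x) powr (- a - 1))"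
proof -
  have "real (Suc n) * cf a x (Suc n) = a * x * cf (a+1) x n" for n
  proof -
    have "real (Suc n) * cf a x (Suc n) = real (Suc n) * (a * pochhammer (a+1) n / (real (Suc n) * fact n) * (x * x^n))"
      unfolding cf_def pochhammer_rec fact_Suc power_Suc by simp
    also have "\<dots> = a * x * cf (a+1) x n"
      unfolding cf_def by (simp add: field_simps del: of_nat_Suc)
    finally show ?thesis .
  qed
  then have e: "(\<lambda>n. real (Suc n) * cf a x (Suc n)) = (\<lambda>n. a * x * cf (a+1) x n)" by (rule ext)
  have "(\<lambda>n. a * x * cf (a+1) x n) sums (a * x * (1 - x) powr (- (a + 1)))"
    by (intro sums_mult S0 assms)
  then have "(\<lambda>n. real (Suc n) * cf a x (Suc n)) sums (a * x * (1 - x) powr (- a - 1))"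
    unfolding e by simp
  from sums_Suc[OF this] show ?thesis by simp
qed

lemma S2:
  assumes "0 \<le> x" "x < 1"
  shows "(\<lambda>n. real n * (real n - 1) * cf a x n) sums (a * (a + 1) * x^2 * (1 - x) powr (- a - 2))"
proof -
  have e: "real (Suc (Suc n)) * (real (Suc (Suc n)) - 1) * cf a x (Suc (Suc n)) = a * (a + 1) * x^2 * cf (a+2) x n" for n
  proof -
    have "real (Suc (Suc n)) * (real (Suc (Suc n)) - 1) * cf a x (Suc (Suc n))
        = real (Suc (Suc n)) * real (Suc n) * (a * ((a + 1) * pochhammer (a+1+1) n) / (real (Suc (Suc n)) * (real (Suc n) * fact n)) * (x * (x * x^n)))"
      unfolding cf_def pochhammer_rec fact_Suc power_Suc by simp
    also have "\<dots> = a * (a + 1) * x^2 * cf (a+2) x n"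
      unfolding cf_def by (simp add: field_simps power2_eq_square del: of_nat_Suc)
    finally show ?thesis .
  qed
  have "(\<lambda>n. a * (a + 1) * x^2 * cf (a+2) x n) sums (a * (a + 1) * x^2 * (1 - x) powr (- (a + 2)))"
    by (intro sums_mult S0 assms)
  then have "(\<lambda>n. real (Suc (Suc n)) * (real (Suc (Suc n)) - 1) * cf a x (Suc (Suc n))) sums (a * (a + 1) * x^2 * (1 - x) powr (- a - 2))"
    unfolding e by simp
  from sums_Suc[OF sums_Suc[OF this]] show ?thesis by simp
qed

lemma nb_pmf_cf:
  assumes "0 < a"
  shows "nb_pmf a p y = p powr a * cf a (1 - p) y"
proof -
  have "Gamma (real y + a) = pochhammer a y * Gamma a"
  proof -
    have "a \<notin> \<int>\<^sub>\<le>\<^sub>0" using assms by (auto elim!: nonpos_Ints_cases)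
    then have "pochhammer a y = Gamma (a + real y) / Gamma a" by (rule pochhammer_Gamma)
    then show ?thesis using Gamma_real_pos[OF assms] by (simp add: add.commute)
  qed
  then show ?thesis using Gamma_real_pos[OF assms]
    unfolding nb_pmf_def cf_def by (simp add: field_simps)
qed

lemma cf_nonneg: "0 < a \<Longrightarrow> 0 \<le> x \<Longrightarrow> 0 \<le> cf a x n"
  unfolding cf_def by (intro mult_nonneg_nonneg divide_nonneg_pos pochhammer_nonneg) auto

lemma nb_nonneg: "0 < a \<Longrightarrow> 0 < p \<Longrightarrow> p < 1 \<Longrightarrow> 0 \<le> nb_pmf a p y"
  by (simp add: nb_pmf_cf cf_nonneg)

lemma powr_aux: "0 < p \<Longrightarrow> p powr a * p powr (- a - real k) = 1 / p^k"
  by (simp add: powr_add[symmetric] powr_minus_divide powr_realpow)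

lemma nb_sums0:
  assumes "0 < a" "0 < p" "p < 1"
  shows "nb_pmf a p sums 1"
proof -
  have "(\<lambda>y. p powr a * cf a (1-p) y) sums (p powr a * (1 - (1-p)) powr (- a))"
    by (intro sums_mult S0) (use assms in auto)
  moreover have "p powr a * (1 - (1-p)) powr (- a) = 1" using assms by (simp add: powr_minus)
  moreover have "nb_pmf a p = (\<lambda>y. p powr a * cf a (1-p) y)" using assms by (simp add: fun_eq_iff nb_pmf_cf)
  ultimately show ?thesis by simp
qed

lemma nb_sums1:
  assumes "0 < a" "0 < p" "p < 1"
  shows "(\<lambda>y. real y * nb_pmf a p y) sums (a * (1-p) / p)"
proof -
  have "(\<lambda>y. p powr a * (real y * cf a (1-p) y)) sums (p powr a * (a * (1-p) * (1 - (1-p)) powr (- a - 1)))"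
    by (intro sums_mult S1) (use assms in auto)
  moreover have "p powr a * (a * (1-p) * (1 - (1-p)) powr (- a - 1)) = a * (1-p) * (p powr a * p powr (- a - 1))"
    by (simp add: ac_simps)
  moreover have "a * (1-p) * (p powr a * p powr (- a - 1)) = a * (1-p) / p"
    using powr_aux[of p a 1] assms by simp
  ultimately show ?thesis using assms by (simp add: nb_pmf_cf mult.left_commute)
qed

lemma nb_sums2:
  assumes "0 < a" "0 < p" "p < 1"
  shows "(\<lambda>y. (real y)^2 * nb_pmf a p y) sums (a * (a+1) * (1-p)^2 / p^2 + a * (1-p) / p)"
proof -
  have "(\<lambda>y. p powr a * (real y * (real y - 1) * cf a (1-p) y)) sums (p powr a * (a * (a + 1) * (1-p)^2 * (1 - (1-p)) powr (- a - 2)))"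
    by (intro sums_mult S2) (use assms in auto)
  moreover have "p powr a * (a * (a + 1) * (1-p)^2 * (1 - (1-p)) powr (- a - 2)) = a * (a + 1) * (1-p)^2 * (p powr a * p powr (- a - 2))"
    by (simp add: ac_simps)
  moreover have "a * (a + 1) * (1-p)^2 * (p powr a * p powr (- a - 2)) = a * (a+1) * (1-p)^2 / p^2"
    using powr_aux[of p a 2] assms by simp
  ultimately have "(\<lambda>y. real y * (real y - 1) * nb_pmf a p y) sums (a * (a+1) * (1-p)^2 / p^2)"
    using assms by (simp add: nb_pmf_cf mult.left_commute)
  from sums_add[OF this nb_sums1[OF assms]] show ?thesis
    by (simp add: power2_eq_square algebra_simps)
qed

definition mu :: "real \<Rightarrow> real \<Rightarrow> real" where "mu a p = a * (1 - p) / p"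
definition sg :: "real \<Rightarrow> real \<Rightarrow> real" where "sg a p = sqrt (a * (1 - p)) / p"

lemma sg_pos: "0 < a \<Longrightarrow> 0 < p \<Longrightarrow> p < 1 \<Longrightarrow> 0 < sg a p"
  unfolding sg_def by simp

lemma sg_sq: "0 < a \<Longrightarrow> 0 < p \<Longrightarrow> p < 1 \<Longrightarrow> (sg a p)^2 = a * (1-p) / p^2"
  unfolding sg_def by (simp add: power_divide)

lemma nb_sums_std2:
  assumes "0 < a" "0 < p" "p < 1"
  shows "(\<lambda>y. nb_pmf a p y * ((real y - mu a p) / sg a p)^2) sums 1"
proof -
  let ?m = "mu a p" and ?s = "sg a p"
  have eq: "nb_pmf a p y * ((real y - ?m) / ?s)^2 =
      (1 / ?s^2) * ((real y)^2 * nb_pmf a p y - 2 * ?m * (real y * nb_pmf a p y) + ?m^2 * nb_pmf a p y)" for y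
    by (simp add: power_divide field_simps power2_eq_square)
  have "(\<lambda>y. (1 / ?s^2) * ((real y)^2 * nb_pmf a p y - 2 * ?m * (real y * nb_pmf a p y) + ?m^2 * nb_pmf a p y))
     sums ((1 / ?s^2) * ((a * (a+1) * (1-p)^2 / p^2 + a * (1-p) / p) - 2 * ?m * (a * (1-p) / p) + ?m^2 * 1))" (is "_ sums ?v")
    by (intro sums_mult sums_add sums_diff nb_sums2 nb_sums1 nb_sums0 assms)
  moreover have B: "(1 / ?s^2) * ((a * (a+1) * (1-p)^2 / p^2 + a * (1-p) / p) - 2 * ?m * (a * (1-p) / p) + ?m^2 * 1) = 1"
    using assms unfolding sg_sq[OF assms] mu_def
    by (simp add: field_simps power2_eq_square)
  ultimately show ?thesis unfolding eq by (simp only:)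
qed

definition P0 :: "real \<Rightarrow> real \<Rightarrow> nat measure" where
  "P0 a p = density (count_space UNIV) (\<lambda>y. ennreal (nb_pmf a p y))"

lemma NB_P0: "NB a p = distr (P0 a p) borel real"
  unfolding NB_def P0_def ..

lemma prob_P0:
  assumes "0 < a" "0 < p" "p < 1"
  shows "prob_space (P0 a p)"
proof (rule prob_spaceI)
  have "emeasure (P0 a p) (space (P0 a p)) = (\<integral>\<^sup>+y. ennreal (nb_pmf a p y) \<partial>count_space UNIV)"
    unfolding P0_def by (simp add: emeasure_density)
  also have "\<dots> = (\<Sum>y. ennreal (nb_pmf a p y))" by (rule nn_integral_count_space_nat)
  also have "\<dots> = ennreal (\<Sum>y. nb_pmf a p y)"
    using nb_sums0[OF assms] nb_nonneg[OF assms] by (intro suminf_ennreal2) (auto simp: sums_iff)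
  also have "(\<Sum>y. nb_pmf a p y) = 1" using nb_sums0[OF assms] by (simp add: sums_iff)
  finally show "emeasure (P0 a p) (space (P0 a p)) = 1" by simp
qed

lemma real_distr_NB:
  assumes "0 < a" "0 < p" "p < 1"
  shows "real_distribution (NB a p)"
proof -
  interpret prob_space "P0 a p" by (rule prob_P0[OF assms])
  have "real \<in> measurable (P0 a p) borel" unfolding P0_def by simp
  from prob_space_distr[OF this] show ?thesis unfolding NB_P0 real_distribution_def real_distribution_axioms_def
    by auto
qed

lemma NB_integral:
  fixes f :: "real \<Rightarrow> 'b::{banach, second_countable_topology}"
  assumes "0 < a" "0 < p" "p < 1" and f[measurable]: "f \<in> borel_measurable borel"
    and sm: "summable (\<lambda>y. nb_pmf a p y * norm (f (real y)))"
  shows "integrable (NB a p) f" "integral\<^sup>L (NB a p) f = (\<Sum>y. nb_pmf a p y *\<^sub>R f (real y))"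
proof -
  have rm: "real \<in> measurable (density (count_space UNIV) (\<lambda>y. ennreal (nb_pmf a p y))) borel" by simp
  have ic: "integrable (count_space UNIV) (\<lambda>y. nb_pmf a p y *\<^sub>R f (real y))"
    unfolding integrable_count_space_nat_iff using sm nb_nonneg[OF assms(1-3)] by simp
  show "integrable (NB a p) f"
    unfolding NB_P0 P0_def
    by (subst integrable_distr_eq[OF rm f], subst integrable_density)
       (use ic nb_nonneg[OF assms(1-3)] in auto)
  show "integral\<^sup>L (NB a p) f = (\<Sum>y. nb_pmf a p y *\<^sub>R f (real y))"
    unfolding NB_P0 P0_def
    by (subst integral_distr[OF rm f], subst integral_density)
       (use ic nb_nonneg[OF assms(1-3)] in \<open>auto simp: integral_count_space_nat\<close>)
qed

lemma LN3:
  fixes z :: complex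
  assumes "norm z \<le> 1/2"
  shows "norm (Ln (1 + z) - z + z^2/2) \<le> 2 * norm z ^ 3"
proof -
  let ?f = "\<lambda>n. (-1)^Suc n / of_nat n * z^n :: complex"
  have nz: "norm z < 1" using assms by simp
  have S: "?f sums Ln (1 + z)" using Ln_series[OF nz] by simp
  have A: "(\<lambda>n. ?f (n + 3)) sums (Ln (1 + z) - (\<Sum>i<3. ?f i))"
    by (rule sums_split_initial_segment[OF S])
  have B: "(\<Sum>i<3. ?f i) = z - z^2/2"
    by (simp add: eval_nat_numeral)
  have E: "Ln (1 + z) - (z - z^2/2) = Ln (1 + z) - z + z^2/2" by simp
  have S3: "(\<lambda>n. ?f (n + 3)) sums (Ln (1 + z) - z + z^2/2)"
    using A unfolding B E .
  have bnd: "norm (?f (n + 3)) \<le> norm z ^ 3 * norm z ^ n" for n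
  proof -
    have "norm (?f (n + 3)) = norm z ^ (n+3) / real (n + 3)"
      by (simp add: norm_mult norm_divide norm_power del: of_nat_add)
    also have "\<dots> \<le> norm z ^ (n+3)"
      by (simp add: divide_le_eq mult_le_cancel_left1)
    also have "\<dots> = norm z ^ 3 * norm z ^ n" by (simp add: power_add mult.commute)
    finally show ?thesis .
  qed
  have gs: "summable (\<lambda>n. norm z ^ 3 * norm z ^ n)"
    by (intro summable_mult summable_geometric) (use nz in simp)
  have "norm (Ln (1 + z) - z + z^2/2) = norm (\<Sum>n. ?f (n + 3))"
    using S3 by (simp add: sums_iff)
  also have "\<dots> \<le> (\<Sum>n. norm z ^ 3 * norm z ^ n)"
    by (rule norm_suminf_le[OF bnd gs])
  also have "\<dots> = norm z ^ 3 * (1 / (1 - norm z))"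
    using nz by (simp add: suminf_mult suminf_geometric)
  also have "\<dots> \<le> norm z ^ 3 * 2"
    using assms by (intro mult_left_mono) (auto simp: field_simps)
  finally show ?thesis by simp
qed

lemma iexp_bounds:
  fixes s :: real
  shows "norm (iexp s - 1) \<le> \<bar>s\<bar>"
    and "norm (iexp s - 1 - \<i> * s + s^2/2) \<le> \<bar>s\<bar>^3 / 6"
proof -
  show "norm (iexp s - 1) \<le> \<bar>s\<bar>" using iexp_approx1[of s 0] by simp
  have "(\<Sum>k \<le> 2. (\<i> * complex_of_real s)^k / fact k) = 1 + \<i> * s - s^2/2"
    by (simp add: eval_nat_numeral power_mult_distrib)
  then show "norm (iexp s - 1 - \<i> * s + s^2/2) \<le> \<bar>s\<bar>^3 / 6"
    using iexp_approx1[of s 2] by (simp add: eval_nat_numeral algebra_simps)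
qed

definition vv :: "real \<Rightarrow> real \<Rightarrow> complex" where
  "vv p s = of_real ((1-p)/p) * (iexp s - 1)"

definition KK :: "real \<Rightarrow> real \<Rightarrow> complex" where
  "KK p s = - Ln (1 - vv p s) - \<i> * of_real ((1-p)/p * s) + of_real ((1-p)/(2*p^2) * s^2)"

lemma KK_identity:
  assumes "0 < p"
  shows "KK p s = of_real ((1-p)/p) * (iexp s - 1 - \<i> * s + s^2/2)
     + of_real ((1-p)^2/(2*p^2)) * (2 * \<i> * s * (iexp s - 1 - \<i> * s) + (iexp s - 1 - \<i> * s)^2)
     - (Ln (1 + (- vv p s)) - (- vv p s) + (- vv p s)^2/2)"
proof -
  have "(1::complex) - vv p s = 1 + (- vv p s)" by simp
  then show ?thesis
    using assms unfolding KK_def vv_def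
    apply (simp only:)
    apply (simp add: field_simps power2_eq_square)
    done
qed

definition CK :: "real \<Rightarrow> real" where
  "CK p = (1-p)/p / 6 + 3 * ((1-p)^2/(2*p^2)) + 2 * ((1-p)/p)^3"

lemma KK_bound:
  assumes "0 < p" "p < 1" "\<bar>s\<bar> \<le> 1" "(1-p)/p * \<bar>s\<bar> \<le> 1/2"
  shows "norm (KK p s) \<le> CK p * \<bar>s\<bar>^3"
proof -
  define q where "q = (1-p)/p"
  define c where "c = (1-p)^2/(2*p^2)"
  have q0: "0 \<le> q" "0 \<le> c" using assms by (auto simp: q_def c_def)
  define w where "w = iexp s - 1 - \<i> * s + s^2/2"
  define u where "u = iexp s - 1 - \<i> * s"
  define L where "L = Ln (1 + (- vv p s)) - (- vv p s) + (- vv p s)^2/2"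
  have id: "KK p s = of_real q * w + of_real c * (2 * \<i> * s * u + u^2) - L"
    unfolding w_def u_def L_def q_def c_def using KK_identity[OF assms(1)] by simp
  have nw: "norm w \<le> \<bar>s\<bar>^3 / 6" unfolding w_def by (rule iexp_bounds(2))
  have s3: "\<bar>s\<bar>^3 \<le> \<bar>s\<bar>^2" using assms(3)
    by (intro power_decreasing) auto
  have s4: "\<bar>s\<bar>^4 \<le> \<bar>s\<bar>^3" using assms(3)
    by (intro power_decreasing) auto
  have "u = w - of_real (s^2/2)" unfolding u_def w_def by simp
  then have "norm u \<le> norm w + \<bar>s\<bar>^2/2"
    by (metis norm_triangle_ineq4 norm_of_real abs_power2 power2_abs abs_divide abs_numeral order_refl add_left_mono order_trans)
  then have nu: "norm u \<le> \<bar>s\<bar>^2" using nw s3 zero_le_power2[of "\<bar>s\<bar>"] by linarith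
  have "norm (2 * \<i> * s * u + u^2) \<le> norm (2 * \<i> * s * u) + norm (u^2)" by (rule norm_triangle_ineq)
  also have "norm (2 * \<i> * s * u) = 2 * \<bar>s\<bar> * norm u" by (simp add: norm_mult)
  also have "norm (u^2) = (norm u)^2" by (simp add: norm_power)
  also have "2 * \<bar>s\<bar> * norm u + (norm u)^2 \<le> 2 * \<bar>s\<bar> * \<bar>s\<bar>^2 + (\<bar>s\<bar>^2)^2"
    using nu by (intro add_mono mult_left_mono power_mono) auto
  also have "\<dots> = 2 * \<bar>s\<bar>^3 + \<bar>s\<bar>^4" by (simp add: power_add[symmetric] eval_nat_numeral)
  finally have nB: "norm (2 * \<i> * s * u + u^2) \<le> 3 * \<bar>s\<bar>^3" using s4 by linarith
  have "norm (- vv p s) = \<bar>q\<bar> * norm (iexp s - 1)"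
    unfolding vv_def norm_minus_cancel norm_mult norm_of_real q_def ..
  also have "\<dots> = q * norm (iexp s - 1)" using q0 by simp
  also have "\<dots> \<le> q * \<bar>s\<bar>" using iexp_bounds(1)[of s] q0(1) by (rule mult_left_mono)
  finally have nv: "norm (- vv p s) \<le> q * \<bar>s\<bar>" .
  have nv2: "norm (- vv p s) \<le> 1/2" using nv assms(4) unfolding q_def by linarith
  have "norm L \<le> 2 * norm (- vv p s)^3" unfolding L_def by (rule LN3[OF nv2])
  also have "\<dots> \<le> 2 * (q * \<bar>s\<bar>)^3" using nv by (intro mult_left_mono power_mono) auto
  finally have nL: "norm L \<le> 2 * q^3 * \<bar>s\<bar>^3" by (simp add: power_mult_distrib)
  have "norm (KK p s) \<le> norm (of_real q * w + of_real c * (2 * \<i> * s * u + u^2)) + norm L"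
    unfolding id by (rule norm_triangle_ineq4)
  also have "\<dots> \<le> norm (of_real q * w) + norm (of_real c * (2 * \<i> * s * u + u^2)) + norm L"
    by (intro add_right_mono norm_triangle_ineq)
  also have "norm (of_real q * w) = q * norm w" using q0 by (simp add: norm_mult)
  also have "norm (of_real c * (2 * \<i> * s * u + u^2)) = c * norm (2 * \<i> * s * u + u^2)"
    using q0 unfolding norm_mult norm_of_real by simp
  also have "q * norm w + c * norm (2 * \<i> * s * u + u^2) + norm L
      \<le> q * (\<bar>s\<bar>^3 / 6) + c * (3 * \<bar>s\<bar>^3) + 2 * q^3 * \<bar>s\<bar>^3"
    by (intro add_mono mult_left_mono nw nB nL q0)
  also have "\<dots> = CK p * \<bar>s\<bar>^3" unfolding CK_def q_def c_def by (simp add: algebra_simps)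
  finally show ?thesis .
qed

lemma pratt_aux:
  fixes X Y cX cY G ep e :: real
  shows "\<bar>X - cX\<bar> \<le> G \<Longrightarrow> \<bar>G - ep\<bar> < e/5 \<Longrightarrow> \<bar>cX - cY\<bar> < e/5 \<Longrightarrow> \<bar>Y - cY\<bar> \<le> ep \<Longrightarrow> ep < e/5 \<Longrightarrow> \<bar>X - Y\<bar> < e"
  unfolding abs_le_iff abs_less_iff by linarith

lemma pratt:
  fixes M :: "'a measure" and fN gN :: "nat \<Rightarrow> 'a \<Rightarrow> real" and f g :: "'a \<Rightarrow> real"
  assumes P: "prob_space M"
    and mf[measurable]: "\<And>n. fN n \<in> borel_measurable M" "f \<in> borel_measurable M"
    and mg[measurable]: "\<And>n. gN n \<in> borel_measurable M" "g \<in> borel_measurable M"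
    and cf: "\<And>x. x \<in> space M \<Longrightarrow> (\<lambda>n. fN n x) \<longlonglongrightarrow> f x"
    and cg: "\<And>x. x \<in> space M \<Longrightarrow> (\<lambda>n. gN n x) \<longlonglongrightarrow> g x"
    and bN: "\<And>n x. x \<in> space M \<Longrightarrow> \<bar>fN n x\<bar> \<le> gN n x"
    and ig: "\<And>n. integrable M (gN n)" "integrable M g"
    and cint: "(\<lambda>n. integral\<^sup>L M (gN n)) \<longlonglongrightarrow> integral\<^sup>L M g"
  shows "(\<lambda>n. integral\<^sup>L M (fN n)) \<longlonglongrightarrow> integral\<^sup>L M f"
proof -
  interpret prob_space M by (rule P)
  have b: "\<bar>f x\<bar> \<le> g x" if x: "x \<in> space M" for x
  proof -
    have "(\<lambda>n. \<bar>fN n x\<bar>) \<longlonglongrightarrow> \<bar>f x\<bar>" by (intro tendsto_intros cf x)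
    then show ?thesis by (rule LIMSEQ_le[OF _ cg[OF x]]) (use bN[OF x] in auto)
  qed
  have ifN: "integrable M (fN n)" for n
    by (rule Bochner_Integration.integrable_bound[OF ig(1)[of n]]) (auto intro!: AE_I2 dest: bN[of _ n] simp: abs_le_iff)
  have if0: "integrable M f"
    by (rule Bochner_Integration.integrable_bound[OF ig(2)]) (auto intro!: AE_I2 dest: b simp: abs_le_iff)
  define clip where "clip K x = max (- K) (min K x)" for K x :: real
  have mclip[measurable]: "(\<lambda>x. clip K (h x)) \<in> borel_measurable M" if [measurable]: "h \<in> borel_measurable M" for K h
    unfolding clip_def by measurable
  have clipb: "\<bar>clip K x\<bar> \<le> K" if "0 \<le> K" for K x using that unfolding clip_def by auto
  have clipd: "\<bar>a - clip K a\<bar> \<le> c - min c K" if "\<bar>a\<bar> \<le> c" "0 \<le> K" for a c K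
    using that unfolding clip_def by auto
  have icl: "integrable M (\<lambda>x. clip K (h x))" if [measurable]: "h \<in> borel_measurable M" "0 \<le> K" for h :: "'a \<Rightarrow> real" and K :: real
    by (rule Bochner_Integration.integrable_bound[of _ "\<lambda>_. K"]) (use clipb[OF that(2)] that(2) in \<open>auto intro!: AE_I2\<close>)
  have imin: "integrable M (\<lambda>x. min (h x) K)" if "integrable M h" "0 \<le> K" for h :: "'a \<Rightarrow> real" and K :: real
  proof (rule Bochner_Integration.integrable_bound[OF that(1)])
    have [measurable]: "h \<in> borel_measurable M" using that(1) by (rule borel_measurable_integrable)
    show "(\<lambda>x. min (h x) K) \<in> borel_measurable M" by measurable
    show "AE x in M. norm (min (h x) K) \<le> norm (h x)" using that(2) by (intro AE_I2) auto
  qed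
  have la: "(\<lambda>n. integral\<^sup>L M (\<lambda>x. min (gN n x) K)) \<longlonglongrightarrow> integral\<^sup>L M (\<lambda>x. min (g x) K)" if K: "0 \<le> K" for K
  proof (rule integral_dominated_convergence[where w="\<lambda>_. K"])
    show "AE x in M. (\<lambda>n. min (gN n x) K) \<longlonglongrightarrow> min (g x) K"
      by (intro AE_I2 tendsto_intros cg)
    show "AE x in M. norm (min (gN n x) K) \<le> K" for n
    proof (intro AE_I2)
      fix x assume "x \<in> space M"
      then have "0 \<le> gN n x" using bN[of x n] by linarith
      then show "norm (min (gN n x) K) \<le> K" using K by auto
    qed
  qed auto
  have lb: "(\<lambda>n. integral\<^sup>L M (\<lambda>x. clip K (fN n x))) \<longlonglongrightarrow> integral\<^sup>L M (\<lambda>x. clip K (f x))" if K: "0 \<le> K" for K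
  proof (rule integral_dominated_convergence[where w="\<lambda>_. K"])
    show "AE x in M. (\<lambda>n. clip K (fN n x)) \<longlonglongrightarrow> clip K (f x)"
      unfolding clip_def by (intro AE_I2 tendsto_intros cf)
    show "AE x in M. norm (clip K (fN n x)) \<le> K" for n
      using clipb[OF K] by auto
  qed auto
  define eps where "eps K = integral\<^sup>L M (\<lambda>x. g x - min (g x) K)" for K
  have lc: "(\<lambda>m. eps (real m)) \<longlonglongrightarrow> 0"
  proof -
    have "(\<lambda>m. integral\<^sup>L M (\<lambda>x. g x - min (g x) (real m))) \<longlonglongrightarrow> integral\<^sup>L M (\<lambda>x. 0)"
    proof (rule integral_dominated_convergence[where w=g])
      show "AE x in M. (\<lambda>m. g x - min (g x) (real m)) \<longlonglongrightarrow> 0"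
      proof (intro AE_I2)
        fix x assume x: "x \<in> space M"
        obtain N :: nat where "g x \<le> real N" using real_arch_simple by blast
        then have "\<forall>m\<ge>N. g x - min (g x) (real m) = 0" by auto
        then show "(\<lambda>m. g x - min (g x) (real m)) \<longlonglongrightarrow> 0"
          by (intro tendsto_eventually) (auto simp: eventually_sequentially)
      qed
      show "AE x in M. norm (g x - min (g x) (real m)) \<le> g x" for m
      proof (intro AE_I2)
        fix x assume "x \<in> space M"
        then have "0 \<le> g x" using b[of x] by linarith
        then show "norm (g x - min (g x) (real m)) \<le> g x" by auto
      qed
    qed (use ig in auto)
    then show ?thesis unfolding eps_def by simp
  qed
  have ld: "\<bar>integral\<^sup>L M h - integral\<^sup>L M (\<lambda>x. clip K (h x))\<bar> \<le> integral\<^sup>L M k - integral\<^sup>L M (\<lambda>x. min (k x) K)"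
    if [measurable]: "h \<in> borel_measurable M" "integrable M h" "integrable M k" "0 \<le> K"
      "\<And>x. x \<in> space M \<Longrightarrow> \<bar>h x\<bar> \<le> k x" for h k :: "'a \<Rightarrow> real" and K :: real
  proof -
    have "integral\<^sup>L M h - integral\<^sup>L M (\<lambda>x. clip K (h x)) = integral\<^sup>L M (\<lambda>x. h x - clip K (h x))"
      using that by (intro Bochner_Integration.integral_diff[symmetric] icl) auto
    also have "\<bar>\<dots>\<bar> \<le> integral\<^sup>L M (\<lambda>x. \<bar>h x - clip K (h x)\<bar>)"
      by (rule integral_abs_bound)
    also have "\<dots> \<le> integral\<^sup>L M (\<lambda>x. k x - min (k x) K)"
      using that by (intro integral_mono integrable_abs Bochner_Integration.integrable_diff icl imin clipd) auto
    also have "\<dots> = integral\<^sup>L M k - integral\<^sup>L M (\<lambda>x. min (k x) K)"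
      using that by (intro Bochner_Integration.integral_diff imin) auto
    finally show ?thesis .
  qed
  show ?thesis
  proof (rule LIMSEQ_I)
    fix e :: real assume e: "0 < e"
    from LIMSEQ_D[OF lc, of "e/5"] e obtain m where "norm (eps (real m) - 0) < e/5" by auto
    then have m: "eps (real m) < e / 5" by simp
    define K where "K = real m"
    have K0: "0 \<le> K" unfolding K_def by simp
    have t1: "(\<lambda>n. integral\<^sup>L M (gN n) - integral\<^sup>L M (\<lambda>x. min (gN n x) K)) \<longlonglongrightarrow> eps K"
    proof -
      have "eps K = integral\<^sup>L M g - integral\<^sup>L M (\<lambda>x. min (g x) K)"
        unfolding eps_def using ig K0 by (intro Bochner_Integration.integral_diff imin) auto
      then show ?thesis by (simp only:) (intro tendsto_diff cint la K0)
    qed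
    from LIMSEQ_D[OF t1, of "e/5"] e obtain N1 where
      N1: "\<And>n. n \<ge> N1 \<Longrightarrow> norm ((integral\<^sup>L M (gN n) - integral\<^sup>L M (\<lambda>x. min (gN n x) K)) - eps K) < e/5" by auto
    from LIMSEQ_D[OF lb[OF K0], of "e/5"] e obtain N2 where
      N2: "\<And>n. n \<ge> N2 \<Longrightarrow> norm (integral\<^sup>L M (\<lambda>x. clip K (fN n x)) - integral\<^sup>L M (\<lambda>x. clip K (f x))) < e/5" by auto
    have epsf: "\<bar>integral\<^sup>L M f - integral\<^sup>L M (\<lambda>x. clip K (f x))\<bar> \<le> eps K"
    proof -
      have "\<bar>integral\<^sup>L M f - integral\<^sup>L M (\<lambda>x. clip K (f x))\<bar> \<le> integral\<^sup>L M g - integral\<^sup>L M (\<lambda>x. min (g x) K)"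
        by (rule ld) (use if0 ig K0 b in auto)
      also have "\<dots> = eps K"
        unfolding eps_def using ig K0 by (intro Bochner_Integration.integral_diff[symmetric] imin) auto
      finally show ?thesis .
    qed
    show "\<exists>no. \<forall>n\<ge>no. norm (integral\<^sup>L M (fN n) - integral\<^sup>L M f) < e"
    proof (intro exI allI impI)
      fix n assume n: "max N1 N2 \<le> n"
      have A: "\<bar>integral\<^sup>L M (fN n) - integral\<^sup>L M (\<lambda>x. clip K (fN n x))\<bar> \<le> integral\<^sup>L M (gN n) - integral\<^sup>L M (\<lambda>x. min (gN n x) K)"
        by (rule ld) (use ifN ig K0 bN in auto)
      have B: "\<bar>(integral\<^sup>L M (gN n) - integral\<^sup>L M (\<lambda>x. min (gN n x) K)) - eps K\<bar> < e/5"
        using N1[of n] n by simp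
      have C: "\<bar>integral\<^sup>L M (\<lambda>x. clip K (fN n x)) - integral\<^sup>L M (\<lambda>x. clip K (f x))\<bar> < e/5"
        using N2[of n] n by simp
      have "eps K < e/5" using m unfolding K_def .
      then show "norm (integral\<^sup>L M (fN n) - integral\<^sup>L M f) < e"
        unfolding real_norm_def by (rule pratt_aux[OF A B C epsf])
    qed
  qed
qed

lemma sets_NB[measurable_cong]: "sets (NB a p) = sets borel"
  by (simp add: NB_def)

lemma space_NB: "space (NB a p) = UNIV"
  by (simp add: NB_def)

definition Pz :: "real \<Rightarrow> real \<Rightarrow> real measure" where
  "Pz a p = distr (NB a p) borel (\<lambda>x. (x - mu a p) / sg a p)"

lemma char_Pz:
  assumes "0 < a" "0 < p" "p < 1"
  shows "char (Pz a p) t = of_real (p powr a) * iexp (- (t * mu a p / sg a p))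
           * (1 - of_real (1-p) * iexp (t / sg a p)) powr (- of_real a)"
proof -
  let ?m = "mu a p" and ?s = "sg a p"
  define z where "z = of_real (1-p) * iexp (t / ?s)"
  have nz: "norm z < 1" unfolding z_def norm_mult norm_of_real norm_exp_i_times using assms by simp
  have "char (Pz a p) t = integral\<^sup>L (NB a p) (\<lambda>x. iexp (t * ((x - ?m) / ?s)))"
    unfolding char_def Pz_def by (subst integral_distr) auto
  also have "\<dots> = (\<Sum>y. nb_pmf a p y *\<^sub>R iexp (t * ((real y - ?m) / ?s)))"
  proof (rule NB_integral(2)[OF assms])
    show "(\<lambda>x. iexp (t * ((x - ?m) / ?s))) \<in> borel_measurable borel" by measurable
    show "summable (\<lambda>y. nb_pmf a p y * norm (iexp (t * ((real y - ?m) / ?s))))"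
      using nb_sums0[OF assms] by (simp add: sums_iff norm_exp_i_times)
  qed
  also have "\<dots> = of_real (p powr a) * iexp (- (t * ?m / ?s)) * (1 - z) powr (- of_real a)"
  proof (rule sums_unique[symmetric])
    have te: "nb_pmf a p y *\<^sub>R iexp (t * ((real y - ?m) / ?s))
        = of_real (p powr a) * iexp (- (t * ?m / ?s)) * (of_real (pochhammer a y / fact y) * z^y)" for y
    proof -
      have "iexp (t * ((real y - ?m) / ?s)) = iexp (- (t * ?m / ?s)) * iexp (t / ?s) ^ y"
      proof -
        have "\<i> * complex_of_real (t * ((real y - ?m) / ?s)) = \<i> * complex_of_real (- (t * ?m / ?s)) + of_nat y * (\<i> * complex_of_real (t / ?s))"
          using sg_pos[OF assms] by (simp add: field_simps)
        then show ?thesis by (simp only: exp_add exp_of_nat_mult)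
      qed
      then show ?thesis
        unfolding nb_pmf_cf[OF assms(1)] cf_def z_def scaleR_conv_of_real
        by (simp add: power_mult_distrib)
    qed
    show "(\<lambda>y. nb_pmf a p y *\<^sub>R iexp (t * ((real y - ?m) / ?s))) sums
        (of_real (p powr a) * iexp (- (t * ?m / ?s)) * (1 - z) powr (- of_real a))"
      unfolding te by (intro sums_mult binser_complex nz)
  qed
  finally show ?thesis unfolding z_def .
qed

lemma s_lim:
  assumes "0 < p" "p < 1"
  shows "((\<lambda>a. t / sg a p) \<longlongrightarrow> 0) at_top"
  using assms unfolding sg_def by real_asymp

lemma char_Pz_exp:
  assumes "0 < a" "0 < p" "p < 1"
  shows "char (Pz a p) t = exp (of_real a * KK p (t / sg a p) - of_real (t^2/2))"
proof -
  let ?m = "mu a p" and ?s = "sg a p"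
  define s where "s = t / ?s"
  define z where "z = of_real (1-p) * iexp s"
  have nz: "norm z < 1" unfolding z_def norm_mult norm_of_real norm_exp_i_times using assms by simp
  then have z1: "1 - z \<noteq> 0" by auto
  have fac: "1 - z = of_real p * (1 - vv p s)"
    unfolding z_def vv_def using assms by (simp add: field_simps)
  then have v1: "1 - vv p s \<noteq> 0" using z1 by auto
  have lnz: "Ln (1 - z) = of_real (ln p) + Ln (1 - vv p s)"
    unfolding fac using assms v1 by (simp add: Ln_times_of_real Ln_of_real)
  have pw: "(1 - z) powr (- of_real a) = exp (- of_real a * Ln (1 - z))"
    using z1 by (simp add: powr_def)
  have "p powr a = exp (a * ln p)" using assms by (simp add: powr_def)
  then have pa: "complex_of_real (p powr a) = exp (of_real (a * ln p))"
    by (simp only: exp_of_real)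
  have R1: "a * ((1-p)/p * s) = t * ?m / ?s"
    unfolding s_def mu_def using assms by (simp add: field_simps)
  have "s^2 = t^2 / (a * (1-p) / p^2)" unfolding s_def power_divide sg_sq[OF assms] ..
  then have R2: "a * ((1-p)/(2*p^2) * s^2) = t^2/2"
    using assms by (simp add: field_simps)
  have "char (Pz a p) t = of_real (p powr a) * iexp (- (t * ?m / ?s)) * (1 - z) powr (- of_real a)"
    unfolding char_Pz[OF assms] z_def s_def ..
  also have "\<dots> = exp (of_real (a * ln p)) * exp (\<i> * of_real (- (t * ?m / ?s))) * exp (- of_real a * Ln (1 - z))"
    unfolding pa pw ..
  also have "\<dots> = exp (of_real (a * ln p) + \<i> * of_real (- (t * ?m / ?s)) + (- of_real a * Ln (1 - z)))"
    by (simp only: exp_add)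
  also have "of_real (a * ln p) + \<i> * of_real (- (t * ?m / ?s)) + (- of_real a * Ln (1 - z))
      = of_real a * KK p s - of_real (t^2/2)"
  proof -
    have "of_real a * KK p s = - of_real a * Ln (1 - vv p s) - \<i> * of_real (a * ((1-p)/p * s)) + of_real (a * ((1-p)/(2*p^2) * s^2))"
      unfolding KK_def by (simp add: algebra_simps)
    also have "\<dots> = - of_real a * Ln (1 - vv p s) - \<i> * of_real (t * ?m / ?s) + of_real (t^2/2)"
      unfolding R1 R2 ..
    finally show ?thesis unfolding lnz by (simp add: algebra_simps)
  qed
  finally show ?thesis unfolding s_def .
qed

lemma char_Pz_lim:
  assumes "0 < p" "p < 1"
  shows "((\<lambda>a. char (Pz a p) t) \<longlongrightarrow> complex_of_real (exp (- (t^2) / 2))) at_top"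
proof -
  define s where "s a = t / sg a p" for a
  have s0: "(s \<longlongrightarrow> 0) at_top" unfolding s_def by (rule s_lim[OF assms])
  have ev1: "eventually (\<lambda>a. \<bar>s a\<bar> \<le> 1 \<and> (1-p)/p * \<bar>s a\<bar> \<le> 1/2 \<and> 0 < a) at_top"
  proof -
    have "eventually (\<lambda>a. norm (s a) < min 1 (p / (2 * (1-p)))) at_top"
      using s0 assms by (intro order_tendstoD(2)[OF tendsto_norm_zero[OF s0]]) auto
    moreover have "eventually (\<lambda>a::real. 0 < a) at_top" by (rule eventually_gt_at_top)
    ultimately show ?thesis
    proof eventually_elim
      case (elim a)
      then have "\<bar>s a\<bar> \<le> 1" "\<bar>s a\<bar> \<le> p / (2 * (1-p))" by auto
      moreover have "(1-p)/p * \<bar>s a\<bar> \<le> (1-p)/p * (p / (2 * (1-p)))"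
        using assms calculation(2) by (intro mult_left_mono) auto
      moreover have "(1-p)/p * (p / (2 * (1-p))) = 1/2" using assms by (simp add: field_simps)
      ultimately show ?case using elim by auto
    qed
  qed
  have main: "((\<lambda>a. of_real a * KK p (s a)) \<longlongrightarrow> 0) at_top"
  proof (rule Lim_null_comparison)
    show "eventually (\<lambda>a. norm (of_real a * KK p (s a)) \<le> CK p * (t^2 * p^2 / (1-p)) * \<bar>s a\<bar>) at_top"
      using ev1
    proof eventually_elim
      case (elim a)
      have "a * (s a)^2 = a * t^2 / (sg a p)^2" by (simp add: s_def power_divide)
      also have "\<dots> = t^2 * p^2 / (1-p)"
        unfolding sg_sq[of a p, OF conjunct2[OF conjunct2[OF elim]] assms] using elim assms
        by (simp add: field_simps)
      finally have as2: "a * (s a)^2 = t^2 * p^2 / (1-p)" .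
      have "norm (of_real a * KK p (s a)) = a * norm (KK p (s a))"
        using elim by (simp add: norm_mult)
      also have "\<dots> \<le> a * (CK p * \<bar>s a\<bar>^3)"
        using elim by (intro mult_left_mono KK_bound assms) auto
      also have "\<bar>s a\<bar>^3 = (s a)^2 * \<bar>s a\<bar>"
        by (simp add: eval_nat_numeral abs_mult_self_eq)
      also have "a * (CK p * ((s a)^2 * \<bar>s a\<bar>)) = CK p * (a * (s a)^2) * \<bar>s a\<bar>"
        by (simp only: ac_simps)
      also have "\<dots> = CK p * (t^2 * p^2 / (1-p)) * \<bar>s a\<bar>" unfolding as2 ..
      finally show ?case .
    qed
    show "((\<lambda>a. CK p * (t^2 * p^2 / (1-p)) * \<bar>s a\<bar>) \<longlongrightarrow> 0) at_top"
      by (rule tendsto_mult_right_zero[OF tendsto_rabs_zero[OF s0]])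
  qed
  have "((\<lambda>a. exp (of_real a * KK p (s a) - of_real (t^2/2))) \<longlongrightarrow> exp (0 - of_real (t^2/2))) at_top"
    by (intro tendsto_intros main)
  moreover have "exp (0 - complex_of_real (t^2/2)) = complex_of_real (exp (- (t^2) / 2))"
    by (simp add: exp_of_real[symmetric])
  ultimately have "((\<lambda>a. exp (of_real a * KK p (s a) - of_real (t^2/2))) \<longlongrightarrow> complex_of_real (exp (- (t^2) / 2))) at_top"
    by simp
  then show ?thesis
  proof (rule Lim_transform_eventually)
    show "eventually (\<lambda>a. exp (of_real a * KK p (s a) - of_real (t^2/2)) = char (Pz a p) t) at_top"
      using eventually_gt_at_top[of 0]
      by eventually_elim (simp add: char_Pz_exp assms s_def)
  qed
qed

lemma real_distr_Pz:
  assumes "0 < a" "0 < p" "p < 1"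
  shows "real_distribution (Pz a p)"
proof -
  interpret real_distribution "NB a p" by (rule real_distr_NB[OF assms])
  show ?thesis unfolding Pz_def real_distribution_def real_distribution_axioms_def
    by (auto intro!: prob_space_distr)
qed

lemma Pz_sq:
  assumes "0 < a" "0 < p" "p < 1"
  shows "integrable (Pz a p) (\<lambda>x. x^2)" "integral\<^sup>L (Pz a p) (\<lambda>x. x^2) = 1"
proof -
  have sm: "summable (\<lambda>y. nb_pmf a p y * norm (((real y - mu a p) / sg a p)^2))"
    using nb_sums_std2[OF assms] by (simp add: sums_iff)
  have i: "integrable (NB a p) (\<lambda>x. ((x - mu a p) / sg a p)^2)"
    by (rule NB_integral(1)[OF assms _ sm]) measurable
  show "integrable (Pz a p) (\<lambda>x. x^2)"
    unfolding Pz_def by (subst integrable_distr_eq) (use i in auto)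
  have "integral\<^sup>L (Pz a p) (\<lambda>x. x^2) = integral\<^sup>L (NB a p) (\<lambda>x. ((x - mu a p) / sg a p)^2)"
    unfolding Pz_def by (subst integral_distr) auto
  also have "\<dots> = (\<Sum>y. nb_pmf a p y *\<^sub>R ((real y - mu a p) / sg a p)^2)"
    by (rule NB_integral(2)[OF assms _ sm]) measurable
  also have "\<dots> = 1" using nb_sums_std2[OF assms] by (simp add: sums_iff)
  finally show "integral\<^sup>L (Pz a p) (\<lambda>x. x^2) = 1" .
qed

lemma NB_from_Pz:
  assumes "0 < a" "0 < p" "p < 1"
  shows "NB a p = distr (Pz a p) borel (\<lambda>z. mu a p + sg a p * z)"
proof -
  have "distr (Pz a p) borel (\<lambda>z. mu a p + sg a p * z)
      = distr (NB a p) borel ((\<lambda>z. mu a p + sg a p * z) \<circ> (\<lambda>x. (x - mu a p) / sg a p))"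
    unfolding Pz_def by (subst distr_distr) auto
  also have "((\<lambda>z. mu a p + sg a p * z) \<circ> (\<lambda>x. (x - mu a p) / sg a p)) = (\<lambda>x. x)"
    using sg_pos[OF assms] by (auto simp: fun_eq_iff)
  also have "distr (NB a p) borel (\<lambda>x. x) = NB a p"
    by (rule distr_id2) (simp add: sets_NB)
  finally show ?thesis ..
qed

lemma rth_cong: "(\<And>i. i < D \<Longrightarrow> x i = y i) \<Longrightarrow> rth_smallest D r x = rth_smallest D r y"
  unfolding rth_smallest_def by (metis (mono_tags, lifting) atLeastLessThan_iff map_eq_conv set_upt)

lemma transfer_PiM:
  fixes \<Omega> :: "'a measure" and Q :: "real measure" and h :: "'a \<Rightarrow> real" and D :: nat and G :: "(nat \<Rightarrow> real) \<Rightarrow> real"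
  assumes P: "prob_space \<Omega>" and Q: "real_distribution Q"
    and h[measurable]: "h \<in> borel_measurable \<Omega>" and hQ: "distr \<Omega> borel h = Q"
    and G[measurable]: "G \<in> borel_measurable (PiM {..<D} (\<lambda>_. borel))"
  shows "integral\<^sup>L (PiM {..<D} (\<lambda>_. Q)) G = integral\<^sup>L (PiM {..<D} (\<lambda>_. \<Omega>)) (\<lambda>\<omega>. G (compose {..<D} h \<omega>))"
proof -
  interpret Q: real_distribution Q by (rule Q)
  have sQ: "sets Q = sets borel" by simp
  have hQ': "h \<in> measurable \<Omega> Q" using h by (simp add: measurable_cong_sets[OF refl sQ])
  have dQ: "distr \<Omega> Q h = Q"
    using hQ[symmetric] by (metis distr_cong sQ) 
  have "PiM {..<D} (\<lambda>_. Q) = PiM {..<D} (\<lambda>i. distr \<Omega> Q h)" unfolding dQ ..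
  also have "\<dots> = distr (PiM {..<D} (\<lambda>_. \<Omega>)) (PiM {..<D} (\<lambda>_. Q)) (compose {..<D} h)"
    by (rule distr_PiM_finite_prob_space'[symmetric]) (use P Q.prob_space_axioms hQ' in simp_all)
  finally have e: "PiM {..<D} (\<lambda>_. Q) = distr (PiM {..<D} (\<lambda>_. \<Omega>)) (PiM {..<D} (\<lambda>_. Q)) (compose {..<D} h)" .
  have sP: "sets (PiM {..<D} (\<lambda>_. Q)) = sets (PiM {..<D} (\<lambda>_. borel))"
    by (intro sets_PiM_cong) auto
  have cm: "compose {..<D} h \<in> measurable (PiM {..<D} (\<lambda>_. \<Omega>)) (PiM {..<D} (\<lambda>_. Q))"
    unfolding compose_def using hQ' by measurable
  have G': "G \<in> borel_measurable (PiM {..<D} (\<lambda>_. Q))"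
    using G by (simp add: measurable_cong_sets[OF sP refl])
  show ?thesis
    by (subst e, rule integral_distr[OF cm G'])
qed

lemma rth_comp_meas:
  fixes \<Omega> :: "'a measure" and h :: "'a \<Rightarrow> real" and D r :: nat
  assumes "1 \<le> r" "r \<le> D" and h[measurable]: "h \<in> borel_measurable \<Omega>"
  shows "(\<lambda>\<omega>. rth_smallest D r (\<lambda>i. h (\<omega> i))) \<in> borel_measurable (PiM {..<D} (\<lambda>_. \<Omega>))"
proof -
  have cm: "compose {..<D} h \<in> measurable (PiM {..<D} (\<lambda>_. \<Omega>)) (PiM {..<D} (\<lambda>_. borel))"
    unfolding compose_def by measurable
  have "(\<lambda>\<omega>. rth_smallest D r (compose {..<D} h \<omega>)) \<in> borel_measurable (PiM {..<D} (\<lambda>_. \<Omega>))"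
    by (rule measurable_compose[OF cm rth_measurable[OF assms(1,2)]])
  moreover have "rth_smallest D r (compose {..<D} h \<omega>) = rth_smallest D r (\<lambda>i. h (\<omega> i))" for \<omega>
    by (rule rth_cong) (simp add: compose_def)
  ultimately show ?thesis by simp
qed

lemma os_integral:
  fixes \<Omega> :: "'a measure" and Q :: "real measure" and h :: "'a \<Rightarrow> real" and D r :: nat
    and F :: "real \<Rightarrow> real"
  assumes "1 \<le> r" "r \<le> D" and P: "prob_space \<Omega>" and Q: "real_distribution Q"
    and h[measurable]: "h \<in> borel_measurable \<Omega>" and hQ: "distr \<Omega> borel h = Q"
    and F[measurable]: "F \<in> borel_measurable borel"
  shows "integral\<^sup>L (order_stat_law D r Q) F
       = integral\<^sup>L (PiM {..<D} (\<lambda>_. \<Omega>)) (\<lambda>\<omega>. F (rth_smallest D r (\<lambda>i. h (\<omega> i))))"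
proof -
  have sP: "sets (PiM {..<D} (\<lambda>_. Q)) = sets (PiM {..<D} (\<lambda>_. borel))"
    using Q by (intro sets_PiM_cong) (auto simp: real_distribution_def real_distribution_axioms_def)
  have rm: "rth_smallest D r \<in> borel_measurable (PiM {..<D} (\<lambda>_. Q))"
    using rth_measurable[OF assms(1,2)] by (simp add: measurable_cong_sets[OF sP refl])
  have "integral\<^sup>L (order_stat_law D r Q) F = integral\<^sup>L (PiM {..<D} (\<lambda>_. Q)) (\<lambda>x. F (rth_smallest D r x))"
    unfolding order_stat_law_def by (rule integral_distr[OF rm F])
  also have "\<dots> = integral\<^sup>L (PiM {..<D} (\<lambda>_. \<Omega>)) (\<lambda>\<omega>. F (rth_smallest D r (compose {..<D} h \<omega>)))"
    by (rule transfer_PiM[OF P Q h hQ]) (use rth_measurable[OF assms(1,2)] in measurable)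
  also have "\<dots> = integral\<^sup>L (PiM {..<D} (\<lambda>_. \<Omega>)) (\<lambda>\<omega>. F (rth_smallest D r (\<lambda>i. h (\<omega> i))))"
  proof -
    have "rth_smallest D r (compose {..<D} h \<omega>) = rth_smallest D r (\<lambda>i. h (\<omega> i))" for \<omega>
      by (rule rth_cong) (simp add: compose_def)
    then show ?thesis by simp
  qed
  finally show ?thesis .
qed

lemma comp_integral:
  fixes \<Omega> :: "'a measure" and F :: "'a \<Rightarrow> real" and D :: nat
  assumes P: "prob_space \<Omega>" and i: "i < D" and F[measurable]: "F \<in> borel_measurable \<Omega>"
  shows "integral\<^sup>L (PiM {..<D} (\<lambda>_. \<Omega>)) (\<lambda>\<omega>. F (\<omega> i)) = integral\<^sup>L \<Omega> F"
    and "integrable \<Omega> F \<Longrightarrow> integrable (PiM {..<D} (\<lambda>_. \<Omega>)) (\<lambda>\<omega>. F (\<omega> i))"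
proof -
  have d: "distr (PiM {..<D} (\<lambda>_. \<Omega>)) \<Omega> (\<lambda>\<omega>. \<omega> i) = \<Omega>"
    by (rule distr_PiM_component) (use P i in auto)
  have cm: "(\<lambda>\<omega>. \<omega> i) \<in> measurable (PiM {..<D} (\<lambda>_. \<Omega>)) \<Omega>"
    using i by (intro measurable_component_singleton) auto
  show "integral\<^sup>L (PiM {..<D} (\<lambda>_. \<Omega>)) (\<lambda>\<omega>. F (\<omega> i)) = integral\<^sup>L \<Omega> F"
    using integral_distr[OF cm F] d by simp
  show "integrable \<Omega> F \<Longrightarrow> integrable (PiM {..<D} (\<lambda>_. \<Omega>)) (\<lambda>\<omega>. F (\<omega> i))"
    using integrable_distr_eq[OF cm F] d by simp
qed

lemma var_lemma:
  fixes M :: "'a measure" and V :: "'a \<Rightarrow> real"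
  assumes P: "prob_space M" and iV: "integrable M V" and iV2: "integrable M (\<lambda>x. (V x)^2)"
  shows "integral\<^sup>L M (\<lambda>x. (a + b * V x - (a + b * integral\<^sup>L M V))^2)
       = b^2 * (integral\<^sup>L M (\<lambda>x. (V x)^2) - (integral\<^sup>L M V)^2)"
proof -
  interpret prob_space M by (rule P)
  define E where "E = integral\<^sup>L M V"
  have "(\<lambda>x. (a + b * V x - (a + b * E))^2) = (\<lambda>x. b^2 * (V x)^2 + (- 2 * b^2 * E) * V x + b^2 * E^2)"
    by (auto simp: fun_eq_iff power2_eq_square algebra_simps)
  then have "integral\<^sup>L M (\<lambda>x. (a + b * V x - (a + b * E))^2)
      = b^2 * integral\<^sup>L M (\<lambda>x. (V x)^2) + (- 2 * b^2 * E) * E + b^2 * E^2"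
    using iV iV2 unfolding E_def by (simp add: prob_space)
  then show ?thesis unfolding E_def[symmetric] by (simp add: power2_eq_square algebra_simps)
qed

lemma abs_le_1_sq: "\<bar>x::real\<bar> \<le> 1 + x^2"
proof (cases "\<bar>x\<bar> \<le> 1")
  case True then show ?thesis by (smt (verit) zero_le_power2)
next
  case False
  then have "\<bar>x\<bar> * 1 \<le> \<bar>x\<bar> * \<bar>x\<bar>" by (intro mult_left_mono) auto
  then show ?thesis by (simp add: power2_eq_square abs_mult_self_eq)
qed

lemma seq_main:
  fixes D r :: nat and p :: real and \<beta> :: "nat \<Rightarrow> real"
  assumes r1: "1 \<le> r" and rD: "r \<le> D" and p0: "0 < p" and p1: "p < 1"
    and \<beta>pos: "\<And>n. 0 < \<beta> n" and \<beta>lim: "filterlim \<beta> at_top sequentially"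
  shows "(\<lambda>n. dispersion (order_stat_law D r (NB (\<beta> n) p))) \<longlonglongrightarrow> var_of (order_stat_law D r std_normal) / p"
proof -
  define \<mu> where "\<mu> n = Pz (\<beta> n) p" for n
  have rd\<mu>: "real_distribution (\<mu> n)" for n unfolding \<mu>_def by (rule real_distr_Pz[OF \<beta>pos p0 p1])
  have rdN: "real_distribution std_normal" unfolding std_normal_def by (rule real_dist_normal_dist)
  have cc: "(\<lambda>n. char (\<mu> n) t) \<longlonglongrightarrow> char std_normal t" for t
  proof -
    have "(\<lambda>n. char (Pz (\<beta> n) p) t) \<longlonglongrightarrow> complex_of_real (exp (- (t^2) / 2))"
      by (rule filterlim_compose[OF char_Pz_lim[OF p0 p1] \<beta>lim])
    then show ?thesis unfolding \<mu>_def std_normal_def char_std_normal_distribution .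
  qed
  have wc: "weak_conv_m \<mu> std_normal" by (rule levy_continuity[OF rd\<mu> rdN cc])
  obtain \<Omega> :: "real measure" and Yn :: "nat \<Rightarrow> real \<Rightarrow> real" and Y :: "real \<Rightarrow> real" where P\<Omega>: "prob_space \<Omega>" and Ynm[measurable]: "\<And>n. Yn n \<in> borel_measurable \<Omega>"
    and dYn: "\<And>n. distr \<Omega> borel (Yn n) = \<mu> n" and Ym: "Y \<in> measurable \<Omega> lborel"
    and dY: "distr \<Omega> borel Y = std_normal" and conv: "\<And>x. x \<in> space \<Omega> \<Longrightarrow> (\<lambda>n. Yn n x) \<longlonglongrightarrow> Y x"
    using Skorohod[OF rd\<mu> rdN wc] by blast
  have Ym'[measurable]: "Y \<in> borel_measurable \<Omega>" using Ym by simp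
  interpret \<Omega>: prob_space \<Omega> by (rule P\<Omega>)
  define PP where "PP = PiM {..<D} (\<lambda>_. \<Omega>)"
  have PPP: "prob_space PP" unfolding PP_def by (rule prob_space_PiM) (rule P\<Omega>)
  define Vn where "Vn n \<omega> = rth_smallest D r (\<lambda>i. Yn n (\<omega> i))" for n \<omega>
  define V where "V \<omega> = rth_smallest D r (\<lambda>i. Y (\<omega> i))" for \<omega>
  define gN where "gN n \<omega> = 1 + (\<Sum>i<D. (Yn n (\<omega> i))^2)" for n \<omega>
  define g where "g \<omega> = 1 + (\<Sum>i<D. (Y (\<omega> i))^2)" for \<omega>
  have mVn[measurable]: "Vn n \<in> borel_measurable PP" for n
    unfolding Vn_def[abs_def] PP_def by (rule rth_comp_meas[OF r1 rD Ynm])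
  have mV[measurable]: "V \<in> borel_measurable PP"
    unfolding V_def[abs_def] PP_def by (rule rth_comp_meas[OF r1 rD Ym'])
  have cmp: "(\<lambda>\<omega>. h (\<omega> i)) \<in> borel_measurable PP" if "i < D" "h \<in> borel_measurable \<Omega>" for i h
  proof -
    have "(\<lambda>\<omega>. \<omega> i) \<in> measurable (PiM {..<D} (\<lambda>_. \<Omega>)) \<Omega>"
      using that(1) by (intro measurable_component_singleton) auto
    from measurable_compose[OF this that(2)] show ?thesis unfolding PP_def .
  qed
  have mgN[measurable]: "gN n \<in> borel_measurable PP" for n
    unfolding gN_def[abs_def]
    by (intro borel_measurable_add borel_measurable_const borel_measurable_sum borel_measurable_power cmp Ynm) auto
  have mg[measurable]: "g \<in> borel_measurable PP"
    unfolding g_def[abs_def]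
    by (intro borel_measurable_add borel_measurable_const borel_measurable_sum borel_measurable_power cmp Ym') auto
  have spc: "\<omega> i \<in> space \<Omega>" if "\<omega> \<in> space PP" "i < D" for \<omega> i
    using that unfolding PP_def space_PiM by auto
  have cY: "(\<lambda>n. Yn n (\<omega> i)) \<longlonglongrightarrow> Y (\<omega> i)" if "\<omega> \<in> space PP" "i < D" for \<omega> i
    by (rule conv[OF spc[OF that]])
  have cV: "(\<lambda>n. Vn n \<omega>) \<longlonglongrightarrow> V \<omega>" if w: "\<omega> \<in> space PP" for \<omega>
  proof (rule LIM_zero_cancel, rule Lim_null_comparison)
    define S where "S n = (\<Sum>i<D. \<bar>Yn n (\<omega> i) - Y (\<omega> i)\<bar>)" for n
    show "eventually (\<lambda>n. norm (Vn n \<omega> - V \<omega>) \<le> S n) sequentially"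
    proof (intro always_eventually allI)
      fix n
      have "\<bar>Vn n \<omega> - V \<omega>\<bar> \<le> S n"
        unfolding Vn_def V_def
      proof (rule rth_lip[OF r1 rD])
        fix i assume "i < D"
        then show "\<bar>Yn n (\<omega> i) - Y (\<omega> i)\<bar> \<le> S n"
          unfolding S_def by (intro member_le_sum) auto
      qed
      then show "norm (Vn n \<omega> - V \<omega>) \<le> S n" by simp
    qed
    show "S \<longlonglongrightarrow> 0" unfolding S_def
    proof (rule tendsto_null_sum)
      fix i assume "i \<in> {..<D}"
      then have "(\<lambda>n. Yn n (\<omega> i) - Y (\<omega> i)) \<longlonglongrightarrow> 0"
        using cY[OF w, of i] by (intro LIM_zero) auto
      then show "(\<lambda>n. \<bar>Yn n (\<omega> i) - Y (\<omega> i)\<bar>) \<longlonglongrightarrow> 0" by (rule tendsto_rabs_zero)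
    qed
  qed
  have cg: "(\<lambda>n. gN n \<omega>) \<longlonglongrightarrow> g \<omega>" if w: "\<omega> \<in> space PP" for \<omega>
    unfolding gN_def g_def by (intro tendsto_intros cY[OF w]) auto
  have bnd: "\<bar>Vn n \<omega>\<bar> \<le> gN n \<omega> \<and> \<bar>(Vn n \<omega>)^2\<bar> \<le> gN n \<omega>" for n \<omega>
  proof -
    obtain j where j: "j < D" "Vn n \<omega> = Yn n (\<omega> j)"
      using rth_mem[OF r1 rD, of "\<lambda>i. Yn n (\<omega> i)"] unfolding Vn_def by blast
    have "(Yn n (\<omega> j))^2 \<le> (\<Sum>i<D. (Yn n (\<omega> i))^2)"
      using j by (intro member_le_sum) auto
    then have "(Vn n \<omega>)^2 \<le> gN n \<omega> - 1" unfolding gN_def j(2) by simp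
    then show ?thesis using abs_le_1_sq[of "Vn n \<omega>"] by simp
  qed
  have bnd0: "\<bar>V \<omega>\<bar> \<le> g \<omega> \<and> \<bar>(V \<omega>)^2\<bar> \<le> g \<omega>" for \<omega>
  proof -
    obtain j where j: "j < D" "V \<omega> = Y (\<omega> j)"
      using rth_mem[OF r1 rD, of "\<lambda>i. Y (\<omega> i)"] unfolding V_def by blast
    have "(Y (\<omega> j))^2 \<le> (\<Sum>i<D. (Y (\<omega> i))^2)"
      using j by (intro member_le_sum) auto
    then have "(V \<omega>)^2 \<le> g \<omega> - 1" unfolding g_def j(2) by simp
    then show ?thesis using abs_le_1_sq[of "V \<omega>"] by simp
  qed
  have iYn: "integrable \<Omega> (\<lambda>x. (Yn n x)^2)" and eYn: "integral\<^sup>L \<Omega> (\<lambda>x. (Yn n x)^2) = 1" for n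
  proof -
    have "integrable (\<mu> n) (\<lambda>x. x^2)" "integral\<^sup>L (\<mu> n) (\<lambda>x. x^2) = 1"
      unfolding \<mu>_def using Pz_sq[OF \<beta>pos p0 p1] by auto
    then show "integrable \<Omega> (\<lambda>x. (Yn n x)^2)" "integral\<^sup>L \<Omega> (\<lambda>x. (Yn n x)^2) = 1"
      unfolding dYn[symmetric] by (simp_all add: integrable_distr_eq integral_distr)
  qed
  have iY: "integrable \<Omega> (\<lambda>x. (Y x)^2)" and eY: "integral\<^sup>L \<Omega> (\<lambda>x. (Y x)^2) = 1"
  proof -
    have "integrable std_normal (\<lambda>x. x^2)" "integral\<^sup>L std_normal (\<lambda>x. x^2) = 1"
      using std_normal_distribution_even_moments[of 1] unfolding std_normal_def by auto
    then show "integrable \<Omega> (\<lambda>x. (Y x)^2)" "integral\<^sup>L \<Omega> (\<lambda>x. (Y x)^2) = 1"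
      unfolding dY[symmetric] by (simp_all add: integrable_distr_eq integral_distr)
  qed
  have igN: "integrable PP (gN n)" and egN: "integral\<^sup>L PP (gN n) = 1 + real D" for n
  proof -
    have ii: "integrable PP (\<lambda>\<omega>. (Yn n (\<omega> i))^2)" if "i < D" for i
      unfolding PP_def by (rule comp_integral(2)[OF P\<Omega> that _ iYn]) simp
    have ei: "integral\<^sup>L PP (\<lambda>\<omega>. (Yn n (\<omega> i))^2) = 1" if "i < D" for i
      unfolding PP_def using comp_integral(1)[OF P\<Omega> that, of "\<lambda>x. (Yn n x)^2"] eYn by simp
    interpret PP: prob_space PP by (rule PPP)
    have isum: "integrable PP (\<lambda>\<omega>. \<Sum>i<D. (Yn n (\<omega> i))^2)"
      by (intro Bochner_Integration.integrable_sum ii) auto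
    show "integrable PP (gN n)" unfolding gN_def[abs_def]
      by (intro Bochner_Integration.integrable_add PP.integrable_const isum)
    have "integral\<^sup>L PP (gN n) = integral\<^sup>L PP (\<lambda>_. 1) + integral\<^sup>L PP (\<lambda>\<omega>. \<Sum>i<D. (Yn n (\<omega> i))^2)"
      unfolding gN_def[abs_def] by (rule Bochner_Integration.integral_add[OF PP.integrable_const isum])
    also have "integral\<^sup>L PP (\<lambda>\<omega>. \<Sum>i<D. (Yn n (\<omega> i))^2) = (\<Sum>i<D. integral\<^sup>L PP (\<lambda>\<omega>. (Yn n (\<omega> i))^2))"
      by (rule Bochner_Integration.integral_sum) (use ii in auto)
    also have "\<dots> = real D" using ei by simp
    also have "integral\<^sup>L PP (\<lambda>_. 1) = (1::real)" by (simp add: PP.prob_space)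
    finally show "integral\<^sup>L PP (gN n) = 1 + real D" .
  qed
  have ig: "integrable PP g" and eg: "integral\<^sup>L PP g = 1 + real D"
  proof -
    have ii: "integrable PP (\<lambda>\<omega>. (Y (\<omega> i))^2)" if "i < D" for i
      unfolding PP_def by (rule comp_integral(2)[OF P\<Omega> that _ iY]) simp
    have ei: "integral\<^sup>L PP (\<lambda>\<omega>. (Y (\<omega> i))^2) = 1" if "i < D" for i
      unfolding PP_def using comp_integral(1)[OF P\<Omega> that, of "\<lambda>x. (Y x)^2"] eY by simp
    interpret PP: prob_space PP by (rule PPP)
    have isum: "integrable PP (\<lambda>\<omega>. \<Sum>i<D. (Y (\<omega> i))^2)"
      by (intro Bochner_Integration.integrable_sum ii) auto
    show "integrable PP (g)" unfolding g_def[abs_def]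
      by (intro Bochner_Integration.integrable_add PP.integrable_const isum)
    have "integral\<^sup>L PP (g) = integral\<^sup>L PP (\<lambda>_. 1) + integral\<^sup>L PP (\<lambda>\<omega>. \<Sum>i<D. (Y (\<omega> i))^2)"
      unfolding g_def[abs_def] by (rule Bochner_Integration.integral_add[OF PP.integrable_const isum])
    also have "integral\<^sup>L PP (\<lambda>\<omega>. \<Sum>i<D. (Y (\<omega> i))^2) = (\<Sum>i<D. integral\<^sup>L PP (\<lambda>\<omega>. (Y (\<omega> i))^2))"
      by (rule Bochner_Integration.integral_sum) (use ii in auto)
    also have "\<dots> = real D" using ei by simp
    also have "integral\<^sup>L PP (\<lambda>_. 1) = (1::real)" by (simp add: PP.prob_space)
    finally show "integral\<^sup>L PP (g) = 1 + real D" .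
  qed
  have cint: "(\<lambda>n. integral\<^sup>L PP (gN n)) \<longlonglongrightarrow> integral\<^sup>L PP g"
    unfolding egN eg by simp
  have L1: "(\<lambda>n. integral\<^sup>L PP (Vn n)) \<longlonglongrightarrow> integral\<^sup>L PP V"
    by (rule pratt[OF PPP mVn mV mgN mg cV cg _ igN ig cint]) (use bnd in auto)
  have L2: "(\<lambda>n. integral\<^sup>L PP (\<lambda>\<omega>. (Vn n \<omega>)^2)) \<longlonglongrightarrow> integral\<^sup>L PP (\<lambda>\<omega>. (V \<omega>)^2)"
    by (rule pratt[OF PPP _ _ mgN mg _ cg _ igN ig cint]) (use bnd cV in \<open>auto intro: tendsto_intros\<close>)
  have iVn: "integrable PP (Vn n)" "integrable PP (\<lambda>\<omega>. (Vn n \<omega>)^2)" for n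
  proof -
    have "norm (Vn n x) \<le> norm (gN n x)" "norm ((Vn n x)^2) \<le> norm (gN n x)" for x
      using bnd[of n x] abs_ge_self[of "gN n x"] unfolding real_norm_def by linarith+
    then show "integrable PP (Vn n)" "integrable PP (\<lambda>\<omega>. (Vn n \<omega>)^2)"
      by (auto intro!: Bochner_Integration.integrable_bound[OF igN[of n]] AE_I2)
  qed
  have iV: "integrable PP V" "integrable PP (\<lambda>\<omega>. (V \<omega>)^2)"
  proof -
    have "norm (V x) \<le> norm (g x)" "norm ((V x)^2) \<le> norm (g x)" for x
      using bnd0[of x] abs_ge_self[of "g x"] unfolding real_norm_def by linarith+
    then show "integrable PP V" "integrable PP (\<lambda>\<omega>. (V \<omega>)^2)"
      by (auto intro!: Bochner_Integration.integrable_bound[OF ig] AE_I2)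
  qed
  define m where "m n = mu (\<beta> n) p" for n
  define s where "s n = sg (\<beta> n) p" for n
  define c where "c n = sqrt (\<beta> n * (1 - p))" for n
  have spos: "0 < s n" for n unfolding s_def by (rule sg_pos[OF \<beta>pos p0 p1])
  have cpos: "0 < c n" for n unfolding c_def using \<beta>pos[of n] p1 by simp
  have sc: "s n = c n / p" for n unfolding s_def sg_def c_def ..
  have mc: "m n = (c n)^2 / p" for n unfolding m_def mu_def c_def using \<beta>pos[of n] p1 by simp
  have hN: "distr \<Omega> borel (\<lambda>x. m n + s n * Yn n x) = NB (\<beta> n) p" for n
  proof -
    have "NB (\<beta> n) p = distr (\<mu> n) borel (\<lambda>z. m n + s n * z)"
      unfolding \<mu>_def m_def s_def by (rule NB_from_Pz[OF \<beta>pos p0 p1])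
    also have "\<dots> = distr \<Omega> borel ((\<lambda>z. m n + s n * z) \<circ> Yn n)"
      unfolding dYn[symmetric] by (subst distr_distr) auto
    finally show ?thesis by (simp add: comp_def)
  qed
  have rNB: "real_distribution (NB (\<beta> n) p)" for n by (rule real_distr_NB[OF \<beta>pos p0 p1])
  have aff: "rth_smallest D r (\<lambda>i. m n + s n * Yn n (\<omega> i)) = m n + s n * Vn n \<omega>" for n \<omega>
  proof -
    have "strict_mono (\<lambda>z. m n + s n * z)" using spos[of n] by (intro strict_monoI) simp
    from rth_mono_map[OF r1 rD this, of "\<lambda>i. Yn n (\<omega> i)"] show ?thesis unfolding Vn_def .
  qed
  interpret PP: prob_space PP by (rule PPP)
  define E where "E n = integral\<^sup>L PP (Vn n)" for n
  define Q2 where "Q2 n = integral\<^sup>L PP (\<lambda>\<omega>. (Vn n \<omega>)^2)" for n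
  have mean: "mean_of (order_stat_law D r (NB (\<beta> n) p)) = m n + s n * E n" for n
  proof -
    have "mean_of (order_stat_law D r (NB (\<beta> n) p)) = integral\<^sup>L PP (\<lambda>\<omega>. rth_smallest D r (\<lambda>i. m n + s n * Yn n (\<omega> i)))"
      unfolding mean_of_def PP_def by (rule os_integral[OF r1 rD P\<Omega> rNB _ hN]) auto
    also have "\<dots> = integral\<^sup>L PP (\<lambda>\<omega>. m n + s n * Vn n \<omega>)" unfolding aff ..
    also have "\<dots> = m n + s n * E n" unfolding E_def using iVn(1)[of n] by (simp add: PP.prob_space)
    finally show ?thesis .
  qed
  have var: "var_of (order_stat_law D r (NB (\<beta> n) p)) = (s n)^2 * (Q2 n - (E n)^2)" for n
  proof -
    have "var_of (order_stat_law D r (NB (\<beta> n) p)) = integral\<^sup>L PP (\<lambda>\<omega>. (rth_smallest D r (\<lambda>i. m n + s n * Yn n (\<omega> i)) - (m n + s n * E n))^2)"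
      unfolding var_of_def mean PP_def by (rule os_integral[OF r1 rD P\<Omega> rNB _ hN]) auto
    also have "\<dots> = integral\<^sup>L PP (\<lambda>\<omega>. (m n + s n * Vn n \<omega> - (m n + s n * integral\<^sup>L PP (Vn n)))^2)"
      unfolding aff E_def ..
    also have "\<dots> = (s n)^2 * (Q2 n - (E n)^2)"
      unfolding Q2_def E_def by (rule var_lemma[OF PPP iVn])
    finally show ?thesis .
  qed
  have mean0: "mean_of (order_stat_law D r std_normal) = integral\<^sup>L PP V"
    unfolding mean_of_def PP_def V_def by (rule os_integral[OF r1 rD P\<Omega> rdN Ym' dY]) auto
  have var0: "var_of (order_stat_law D r std_normal) = integral\<^sup>L PP (\<lambda>\<omega>. (V \<omega>)^2) - (integral\<^sup>L PP V)^2"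
  proof -
    have "var_of (order_stat_law D r std_normal) = integral\<^sup>L PP (\<lambda>\<omega>. (V \<omega> - integral\<^sup>L PP V)^2)"
      unfolding var_of_def mean0 unfolding PP_def V_def by (rule os_integral[OF r1 rD P\<Omega> rdN Ym' dY]) auto
    also have "\<dots> = integral\<^sup>L PP (\<lambda>\<omega>. (0 + 1 * V \<omega> - (0 + 1 * integral\<^sup>L PP V))^2)" by simp
    also have "\<dots> = 1^2 * (integral\<^sup>L PP (\<lambda>\<omega>. (V \<omega>)^2) - (integral\<^sup>L PP V)^2)"
      by (rule var_lemma[OF PPP iV])
    finally show ?thesis by simp
  qed
  have disp: "dispersion (order_stat_law D r (NB (\<beta> n) p)) = ((Q2 n - (E n)^2) / p) / (1 + E n / c n)" for n
  proof -
    have "dispersion (order_stat_law D r (NB (\<beta> n) p)) = (s n)^2 * (Q2 n - (E n)^2) / (m n + s n * E n)"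
      unfolding dispersion_def mean var ..
    also have "\<dots> = ((Q2 n - (E n)^2) / p) / (1 + E n / c n)"
    proof (cases "c n + E n = 0")
      case True
      then have "E n = - c n" by simp
      then show ?thesis unfolding sc mc using cpos[of n] p0 by (simp add: power2_eq_square)
    next
      case False
      have nz1: "p * E n + p * c n \<noteq> 0" using False p0 by (metis distrib_left mult_eq_0_iff add.commute less_irrefl)
      have nz2: "p * (p * (E n * c n)) + p * (p * (c n * c n)) \<noteq> 0"
      proof -
        have "p * (p * (E n * c n)) + p * (p * (c n * c n)) = p * p * c n * (c n + E n)" by (simp add: algebra_simps)
        then show ?thesis using False p0 cpos[of n] by simp
      qed
      show ?thesis unfolding sc mc using cpos[of n] p0 nz1 nz2
        by (simp add: field_simps power2_eq_square)
    qed
    finally show ?thesis .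
  qed
  have climit: "filterlim c at_top sequentially"
  proof -
    have "filterlim (\<lambda>a. sqrt (a * (1 - p))) at_top at_top" using p0 p1 by real_asymp
    from filterlim_compose[OF this \<beta>lim] show ?thesis unfolding c_def .
  qed
  have "(\<lambda>n. E n / c n) \<longlonglongrightarrow> 0"
    by (rule tendsto_divide_0[OF L1[folded E_def] filterlim_at_top_imp_at_infinity[OF climit]])
  then have "(\<lambda>n. ((Q2 n - (E n)^2) / p) / (1 + E n / c n)) \<longlonglongrightarrow>
      ((integral\<^sup>L PP (\<lambda>\<omega>. (V \<omega>)^2) - (integral\<^sup>L PP V)^2) / p) / (1 + 0)"
    unfolding Q2_def E_def using p0 by (intro tendsto_intros L1 L2) auto
  then show ?thesis unfolding disp var0 by simp
qed

theorem mainTheorem5: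
  fixes D r :: nat and p :: real
  assumes "1 \<le> r" and "r \<le> D" and "0 < p" and "p < 1"
  shows "((\<lambda>\<alpha>. dispersion (order_stat_law D r (NB \<alpha> p)))
           \<longlongrightarrow> var_of (order_stat_law D r std_normal) / p) at_top"
proof (rule tendsto_at_topI_sequentially)
  fix X :: "nat \<Rightarrow> real"
  assume X: "filterlim X at_top sequentially"
  define \<beta> where "\<beta> n = max (X n) 1" for n
  have \<beta>pos: "0 < \<beta> n" for n unfolding \<beta>_def by simp
  have \<beta>lim: "filterlim \<beta> at_top sequentially"
    by (rule filterlim_at_top_mono[OF X]) (auto simp: \<beta>_def)
  have L: "(\<lambda>n. dispersion (order_stat_law D r (NB (\<beta> n) p))) \<longlonglongrightarrow> var_of (order_stat_law D r std_normal) / p"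
    by (rule seq_main[OF assms \<beta>pos \<beta>lim])
  have ev: "eventually (\<lambda>n. 1 \<le> X n) sequentially"
    using X unfolding filterlim_at_top by blast
  show "(\<lambda>n. dispersion (order_stat_law D r (NB (X n) p))) \<longlonglongrightarrow> var_of (order_stat_law D r std_normal) / p"
    using L
  proof (rule Lim_transform_eventually)
    show "eventually (\<lambda>n. dispersion (order_stat_law D r (NB (\<beta> n) p)) = dispersion (order_stat_law D r (NB (X n) p))) sequentially"
      using ev by eventually_elim (simp add: \<beta>_def)
  qed
qed

end
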